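(* Let $\mathfrak A$ be a real Banach space of dimension $2$ with norm $|\cdot|_{\mathfrak A}$ and closed unit ball $K$. For every Borel probability measure $\nu$ supported on $K$, \[\Delta(\nu)\leq\frac{48}{31}+\frac{6}{31}\sqrt2 \;(=1.8221\ldots).\] In particular $\Delta(\nu)<\frac32+\frac14\sqrt2$.
   Context: For a real finite-dimensional Banach space $\mathfrak A$ with norm $|\cdot|_{\mathfrak A}$ and closed unit ball $K$, and a Borel probability measure $\nu$ supported on $K$, the averaged self-distance of $\nu$ is \[\Delta(\nu)=\int_{x\in K}\int_{y\in K}|x-y|_{\mathfrak A}\,d\nu(x)\,d\nu(y).\] *)

theory Defs
  imports "HOL-Probability.Probability"
begin

definition is_norm :: "('a::real_vector \<Rightarrow> real) \<Rightarrow> bool" where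
  "is_norm N \<longleftrightarrow>
     (\<forall>x. 0 \<le> N x) \<and> (\<forall>x. N x = 0 \<longleftrightarrow> x = 0) \<and>
     (\<forall>x y. N (x + y) \<le> N x + N y) \<and> (\<forall>c x. N (c *\<^sub>R x) = \<bar>c\<bar> * N x)"

definition unit_ball_N :: "('a \<Rightarrow> real) \<Rightarrow> 'a set" where
  "unit_ball_N N = {x. N x \<le> 1}"

definition avg_self_dist :: "('a::real_vector \<Rightarrow> real) \<Rightarrow> 'a measure \<Rightarrow> real" where
  "avg_self_dist N \<nu> = (\<integral>x. (\<integral>y. N (x - y) \<partial>\<nu>) \<partial>\<nu>)"

end

theory Submission
  imports Defs
begin


definition fq :: "bool \<times> bool \<times> bool \<times> bool \<Rightarrow> real \<Rightarrow> real \<Rightarrow> real" where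
  "fq k s1 s2 = (case k of (b1,b2,i,j) \<Rightarrow>
     (if (0 \<le> s1) = b1 \<and> (0 \<le> s2) = b2 then
        (if j then \<bar>if i then s1 else s2\<bar> else 1 - \<bar>if i then s1 else s2\<bar>) else 0))"

lemma sum16: "(\<Sum>k\<in>(UNIV::(bool\<times>bool\<times>bool\<times>bool) set). f k) =
  f (False,False,False,False) + f (False,False,False,True) + f (False,False,True,False) + f (False,False,True,True) +
  f (False,True,False,False) + f (False,True,False,True) + f (False,True,True,False) + f (False,True,True,True) +
  f (True,False,False,False) + f (True,False,False,True) + f (True,False,True,False) + f (True,False,True,True) +
  f (True,True,False,False) + f (True,True,False,True) + f (True,True,True,False) + f (True,True,True,True)"
  by (simp add: UNIV_Times_UNIV[symmetric] sum.cartesian_product[symmetric] UNIV_bool add.assoc del: UNIV_Times_UNIV)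

lemma sumq: "(\<Sum>k\<in>UNIV. fq k s1 s2 * fq k t1 t2) =
  (if ((0 \<le> s1) = (0 \<le> t1) \<and> (0 \<le> s2) = (0 \<le> t2)) then
     (1-\<bar>s1\<bar>)*(1-\<bar>t1\<bar>) + \<bar>s1\<bar>*\<bar>t1\<bar> + (1-\<bar>s2\<bar>)*(1-\<bar>t2\<bar>) + \<bar>s2\<bar>*\<bar>t2\<bar> else 0)"
  unfolding sum16 fq_def by auto

lemma pointwise:
  fixes s1 s2 t1 t2 D :: real
  assumes "\<bar>s1\<bar> \<le> 1" "\<bar>s2\<bar> \<le> 1" "\<bar>t1\<bar> \<le> 1" "\<bar>t2\<bar> \<le> 1"
    and "D \<le> 2" "D \<le> \<bar>s1 - t1\<bar> + \<bar>s2 - t2\<bar>"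
  shows "D \<le> 2 - (\<Sum>k\<in>UNIV. fq k s1 s2 * fq k t1 t2)"
proof (cases "(0 \<le> s1) = (0 \<le> t1) \<and> (0 \<le> s2) = (0 \<le> t2)")
  case True
  have h: "\<bar>a - b\<bar> \<le> 2 - ((1-\<bar>a\<bar>)*(1-\<bar>b\<bar>) + \<bar>a\<bar>*\<bar>b\<bar>) - 1"
    if "\<bar>a\<bar> \<le> 1" "\<bar>b\<bar> \<le> 1" "(0 \<le> a) = (0 \<le> b)" for a b :: real
  proof -
    have 1: "\<bar>a - b\<bar> = \<bar>\<bar>a\<bar> - \<bar>b\<bar>\<bar>" using that(3) by (cases "0 \<le> a") auto
    have "\<bar>a\<bar> * \<bar>b\<bar> \<le> 1 * \<bar>b\<bar>" "\<bar>a\<bar> * \<bar>b\<bar> \<le> \<bar>a\<bar> * 1"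
      using that by (intro mult_right_mono mult_left_mono; simp)+
    then show ?thesis unfolding 1 by (simp add: algebra_simps) arith
  qed
  show ?thesis unfolding sumq using True h[of s1 t1] h[of s2 t2] assms by auto
next
  case False
  then show ?thesis unfolding sumq using assms by auto
qed

lemma abstract_bound:
  fixes M :: "'a measure" and D :: "'a \<Rightarrow> 'a \<Rightarrow> real" and \<phi> :: "'i \<Rightarrow> 'a \<Rightarrow> real"
  assumes P: "prob_space M" and K: "measure M K = 1" and I: "finite I"
    and meas: "\<And>k. k\<in>I \<Longrightarrow> \<phi> k \<in> borel_measurable M"
    and bnd: "\<And>k x. k\<in>I \<Longrightarrow> \<bar>\<phi> k x\<bar> \<le> B"
    and D0: "\<And>x y. x\<in>K \<Longrightarrow> y\<in>K \<Longrightarrow> 0 \<le> D x y"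
    and DB: "\<And>x y. x\<in>K \<Longrightarrow> y\<in>K \<Longrightarrow> D x y \<le> 2 - (\<Sum>k\<in>I. \<phi> k x * \<phi> k y)"
  shows "(\<integral>x. (\<integral>y. D x y \<partial>M) \<partial>M) \<le> 2 - (\<Sum>k\<in>I. (\<integral>x. \<phi> k x \<partial>M)^2)"
proof -
  interpret prob_space M by fact
  have AEK: "AE x in M. x \<in> K" using K by (intro AE_prob_1) simp
  define c where "c k = (\<integral>x. \<phi> k x \<partial>M)" for k
  have int: "integrable M (\<phi> k)" if "k \<in> I" for k
    using that by (intro integrable_const_bound[of _ B] AE_I2) (simp_all add: meas bnd)
  have intS: "integrable M (\<lambda>y. \<Sum>k\<in>I. a k * \<phi> k y)" for a
    by (rule Bochner_Integration.integrable_sum, rule integrable_mult_right, erule int)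
  have Gint: "integrable M (\<lambda>y. 2 - (\<Sum>k\<in>I. a k * \<phi> k y))" for a
    by (rule Bochner_Integration.integrable_diff[OF integrable_const intS])
  have Geq: "(\<integral>y. 2 - (\<Sum>k\<in>I. a k * \<phi> k y) \<partial>M) = 2 - (\<Sum>k\<in>I. a k * c k)" for a
  proof -
    have "(\<integral>y. 2 - (\<Sum>k\<in>I. a k * \<phi> k y) \<partial>M) = (\<integral>y. 2 \<partial>M) - (\<integral>y. (\<Sum>k\<in>I. a k * \<phi> k y) \<partial>M)"
      by (rule Bochner_Integration.integral_diff[OF integrable_const intS])
    also have "(\<integral>y. (\<Sum>k\<in>I. a k * \<phi> k y) \<partial>M) = (\<Sum>k\<in>I. (\<integral>y. a k * \<phi> k y \<partial>M))"
      by (rule Bochner_Integration.integral_sum, rule integrable_mult_right, erule int)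
    also have "\<dots> = (\<Sum>k\<in>I. a k * c k)" by (simp add: c_def)
    finally show ?thesis by (simp add: prob_space)
  qed
  have inner: "(\<integral>y. D x y \<partial>M) \<le> 2 - (\<Sum>k\<in>I. c k * \<phi> k x)" if x: "x \<in> K" for x
  proof -
    have "(\<integral>y. D x y \<partial>M) \<le> (\<integral>y. 2 - (\<Sum>k\<in>I. \<phi> k x * \<phi> k y) \<partial>M)"
    proof (rule integral_mono_AE')
      show "integrable M (\<lambda>y. 2 - (\<Sum>k\<in>I. \<phi> k x * \<phi> k y))" by (rule Gint)
      show "AE y in M. D x y \<le> 2 - (\<Sum>k\<in>I. \<phi> k x * \<phi> k y)"
        using AEK by eventually_elim (simp add: x DB)
      show "AE y in M. 0 \<le> 2 - (\<Sum>k\<in>I. \<phi> k x * \<phi> k y)"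
        using AEK by eventually_elim (metis x DB D0 order_trans)
    qed
    also have "\<dots> = 2 - (\<Sum>k\<in>I. \<phi> k x * c k)" by (rule Geq)
    also have "\<dots> = 2 - (\<Sum>k\<in>I. c k * \<phi> k x)" by (simp add: mult.commute)
    finally show ?thesis .
  qed
  have inner0: "0 \<le> (\<integral>y. D x y \<partial>M)" if x: "x \<in> K" for x
    by (intro integral_nonneg_AE) (use AEK in \<open>eventually_elim, simp add: x D0\<close>)
  have "(\<integral>x. (\<integral>y. D x y \<partial>M) \<partial>M) \<le> (\<integral>x. 2 - (\<Sum>k\<in>I. c k * \<phi> k x) \<partial>M)"
  proof (rule integral_mono_AE')
    show "integrable M (\<lambda>x. 2 - (\<Sum>k\<in>I. c k * \<phi> k x))" by (rule Gint)
    show "AE x in M. (\<integral>y. D x y \<partial>M) \<le> 2 - (\<Sum>k\<in>I. c k * \<phi> k x)"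
      using AEK by eventually_elim (simp add: inner)
    show "AE x in M. 0 \<le> 2 - (\<Sum>k\<in>I. c k * \<phi> k x)"
      using AEK by eventually_elim (metis inner inner0 order_trans)
  qed
  also have "\<dots> = 2 - (\<Sum>k\<in>I. c k * c k)" by (rule Geq)
  finally show ?thesis by (simp add: c_def power2_eq_square)
qed

lemma two_sq: "(x::real)^2 + y^2 \<ge> (x+y)^2/2"
proof -
  have "0 \<le> (x-y)^2" by simp
  then show ?thesis by (simp add: power2_eq_square algebra_simps)
qed

lemma four_sq: "(a::real)^2 + b^2 + c^2 + d^2 \<ge> (a+b+c+d)^2/4"
proof -
  have "0 \<le> (a-b)^2 + (a-c)^2 + (a-d)^2 + (b-c)^2 + (b-d)^2 + (c-d)^2" by simp
  then show ?thesis by (simp add: power2_eq_square algebra_simps)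
qed

lemma sq16:
  fixes c :: "bool\<times>bool\<times>bool\<times>bool \<Rightarrow> real"
  assumes "\<And>b1 b2. c(b1,b2,False,True)+c(b1,b2,False,False) = c(b1,b2,True,True)+c(b1,b2,True,False)"
    and "(c(False,False,True,True)+c(False,False,True,False)) + (c(False,True,True,True)+c(False,True,True,False))
       + (c(True,False,True,True)+c(True,False,True,False)) + (c(True,True,True,True)+c(True,True,True,False)) = 1"
  shows "(\<Sum>k\<in>UNIV. (c k)^2) \<ge> 1/4"
proof -
  define w where "w b1 b2 = c(b1,b2,True,True)+c(b1,b2,True,False)" for b1 b2
  have A: "(c(b1,b2,i,True))^2 + (c(b1,b2,i,False))^2 \<ge> (w b1 b2)^2/2" for b1 b2 i
    using two_sq[of "c(b1,b2,i,True)" "c(b1,b2,i,False)"] assms(1)[of b1 b2] unfolding w_def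
    by (cases i) auto
  have B: "(w False False)^2 + (w False True)^2 + (w True False)^2 + (w True True)^2 \<ge> 1/4"
    using four_sq[of "w False False" "w False True" "w True False" "w True True"] assms(2)
    unfolding w_def by simp
  show ?thesis unfolding sum16
    using A[of False False False] A[of False False True] A[of False True False] A[of False True True]
      A[of True False False] A[of True False True] A[of True True False] A[of True True True] B
    by linarith
qed

lemma meas_test:
  fixes f g :: "'a \<Rightarrow> real"
  assumes [measurable]: "f \<in> borel_measurable M" "g \<in> borel_measurable M"
  shows "(\<lambda>x. fq k (f x) (g x)) \<in> borel_measurable M"
  unfolding fq_def by (cases k) measurable



definition det2 :: "real^2 \<Rightarrow> real^2 \<Rightarrow> real" where
  "det2 u v = u $ 1 * v $ 2 - u $ 2 * v $ 1"

lemma det2_cont: "continuous_on S (\<lambda>p::(real^2)\<times>(real^2). \<bar>det2 (fst p) (snd p)\<bar>)"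
  unfolding det2_def by (intro continuous_intros)

lemma decomp2: "x = (x $ 1) *\<^sub>R (axis 1 1 :: real^2) + (x $ 2) *\<^sub>R axis 2 1"
  by (simp add: vec_eq_iff forall_2 axis_def)

lemma coord_decomp:
  assumes "det2 u v \<noteq> 0"
  shows "x = (det2 x v / det2 u v) *\<^sub>R u + (det2 u x / det2 u v) *\<^sub>R v"
proof -
  let ?D = "det2 u v"
  have e1: "det2 x v / ?D * u $ 1 + det2 u x / ?D * v $ 1 = (det2 x v * u $ 1 + det2 u x * v $ 1) / ?D"
    by (simp add: add_divide_distrib)
  have e2: "det2 x v / ?D * u $ 2 + det2 u x / ?D * v $ 2 = (det2 x v * u $ 2 + det2 u x * v $ 2) / ?D"
    by (simp add: add_divide_distrib)
  have f1: "det2 x v * u $ 1 + det2 u x * v $ 1 = x $ 1 * ?D" by (simp add: det2_def algebra_simps)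
  have f2: "det2 x v * u $ 2 + det2 u x * v $ 2 = x $ 2 * ?D" by (simp add: det2_def algebra_simps)
  have g1: "x $ 1 = det2 x v * u $ 1 / det2 u v + det2 u x * v $ 1 / det2 u v"
    using f1 assms by (simp add: add_divide_distrib[symmetric])
  have g2: "x $ 2 = det2 x v * u $ 2 / det2 u v + det2 u x * v $ 2 / det2 u v"
    using f2 assms by (simp add: add_divide_distrib[symmetric])
  show ?thesis using g1 g2 by (simp add: vec_eq_iff forall_2)
qed

lemma det2_lin1: "det2 (x - y) v = det2 x v - det2 y v"
  by (simp add: det2_def algebra_simps)
lemma det2_lin2: "det2 u (x - y) = det2 u x - det2 u y"
  by (simp add: det2_def algebra_simps)

context
  fixes N :: "real^2 \<Rightarrow> real"
  assumes nN: "is_norm N"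
begin

lemma N_nonneg: "0 \<le> N x" using nN by (simp add: is_norm_def)
lemma N_zero: "N x = 0 \<longleftrightarrow> x = 0" using nN by (simp add: is_norm_def)
lemma N_tri: "N (x + y) \<le> N x + N y" using nN by (simp add: is_norm_def)
lemma N_scale: "N (c *\<^sub>R x) = \<bar>c\<bar> * N x" using nN by (simp add: is_norm_def)

lemma N_minus: "N (- x) = N x"
  using N_scale[of "-1" x] by simp

lemma N_diff: "N (x - y) \<le> N x + N y"
  using N_tri[of x "- y"] N_minus[of y] by simp

lemma N_comb: "N (a *\<^sub>R u + b *\<^sub>R v) \<le> \<bar>a\<bar> * N u + \<bar>b\<bar> * N v"
  using N_tri[of "a *\<^sub>R u" "b *\<^sub>R v"] N_scale by simp

lemma N_rev_tri: "\<bar>N x - N y\<bar> \<le> N (x - y)"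
proof -
  have "N x \<le> N (x - y) + N y" using N_tri[of "x - y" y] by simp
  moreover have "N y \<le> N (x - y) + N x"
    using N_tri[of "y - x" x] N_minus[of "x - y"] by simp
  ultimately show ?thesis by linarith
qed

definition LN where "LN = N (axis 1 1) + N (axis 2 1) + 1"

lemma LN_pos: "LN > 0" unfolding LN_def using N_nonneg[of "axis 1 1"] N_nonneg[of "axis 2 1"] by linarith

lemma N_upper: "N x \<le> LN * norm x"
proof -
  have "N x \<le> \<bar>x $ 1\<bar> * N (axis 1 1) + \<bar>x $ 2\<bar> * N (axis 2 1)"
    using N_comb[of "x $ 1" "axis 1 1" "x $ 2" "axis 2 1"] decomp2[of x] by simp
  also have "\<dots> \<le> norm x * N (axis 1 1) + norm x * N (axis 2 1)"
    using component_le_norm_cart[of x 1] component_le_norm_cart[of x 2] N_nonneg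
    by (intro add_mono mult_right_mono) auto
  also have "\<dots> \<le> LN * norm x" unfolding LN_def by (simp add: algebra_simps)
  finally show ?thesis .
qed

lemma N_cont: "continuous_on S N"
  unfolding continuous_on_iff
proof (intro ballI allI impI)
  fix x e assume "x \<in> S" "(0::real) < e"
  show "\<exists>d>0. \<forall>x'\<in>S. dist x' x < d \<longrightarrow> dist (N x') (N x) < e"
  proof (intro exI[of _ "e / LN"] conjI ballI impI)
    show "0 < e / LN" using \<open>0 < e\<close> LN_pos by simp
    fix x' assume "dist x' x < e / LN"
    then have "LN * norm (x' - x) < e" using LN_pos by (simp add: dist_norm field_simps)
    moreover have "dist (N x') (N x) \<le> LN * norm (x' - x)"
      using N_rev_tri[of x' x] N_upper[of "x' - x"] by (simp add: dist_real_def)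
    ultimately show "dist (N x') (N x) < e" by linarith
  qed
qed

lemma N_lower: "\<exists>m>0. \<forall>x. m * norm x \<le> N x"
proof -
  have "compact (sphere (0::real^2) 1)" by simp
  moreover have "axis 1 1 \<in> sphere (0::real^2) 1" by simp
  ultimately obtain p where p: "p \<in> sphere 0 1" and pmin: "\<forall>y\<in>sphere 0 1. N p \<le> N y"
    using continuous_attains_inf[of "sphere (0::real^2) 1" N] N_cont by blast
  have "p \<noteq> 0" using p by auto
  then have pos: "N p > 0" using N_zero[of p] N_nonneg[of p] by linarith
  have "N p * norm x \<le> N x" for x
  proof (cases "x = 0")
    case True then show ?thesis by (simp add: N_nonneg)
  next
    case False
    then have "(1 / norm x) *\<^sub>R x \<in> sphere 0 1" by simp
    then have "N p \<le> N ((1 / norm x) *\<^sub>R x)" using pmin by blast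
    also have "\<dots> = N x / norm x" using N_scale[of "1 / norm x" x] by simp
    finally show ?thesis using False by (simp add: field_simps)
  qed
  then show ?thesis using pos by (intro exI[of _ "N p"]) (simp add: mult.commute)
qed

lemma K_compact: "compact (unit_ball_N N)"
proof -
  obtain m where m: "m > 0" "\<And>x. m * norm x \<le> N x" using N_lower by blast
  have "unit_ball_N N \<subseteq> cball 0 (1 / m)"
  proof
    fix x assume "x \<in> unit_ball_N N"
    then have "m * norm x \<le> 1" using m(2)[of x] by (simp add: unit_ball_N_def)
    then show "x \<in> cball 0 (1 / m)" using m(1) by (simp add: field_simps)
  qed
  then have "bounded (unit_ball_N N)" using bounded_cball bounded_subset by blast
  moreover have "closed (unit_ball_N N)"
    unfolding unit_ball_N_def by (intro closed_Collect_le N_cont continuous_on_const)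
  ultimately show ?thesis by (simp add: compact_eq_bounded_closed)
qed

lemma auerbach:
  obtains u v where "N u \<le> 1" "N v \<le> 1" "det2 u v \<noteq> 0"
    "\<And>x. N x \<le> 1 \<Longrightarrow> \<bar>det2 x v\<bar> \<le> \<bar>det2 u v\<bar>"
    "\<And>x. N x \<le> 1 \<Longrightarrow> \<bar>det2 u x\<bar> \<le> \<bar>det2 u v\<bar>"
proof -
  let ?K = "unit_ball_N N"
  have cK: "compact (?K \<times> ?K)" using K_compact by (intro compact_Times)
  have "0 \<in> ?K" using N_zero[of 0] by (simp add: unit_ball_N_def)
  then have ne: "?K \<times> ?K \<noteq> {}" by blast
  obtain q where q: "q \<in> ?K \<times> ?K" and qmax: "\<forall>y\<in>?K \<times> ?K. \<bar>det2 (fst y) (snd y)\<bar> \<le> \<bar>det2 (fst q) (snd q)\<bar>"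
    using continuous_attains_sup[OF cK ne det2_cont] by blast
  define u where "u = fst q"
  define v where "v = snd q"
  have u: "N u \<le> 1" and v: "N v \<le> 1" using q by (auto simp: u_def v_def unit_ball_N_def)
  define a where "a = N (axis 1 1 :: real^2)"
  define b where "b = N (axis 2 1 :: real^2)"
  have a: "a > 0" unfolding a_def using N_zero[of "axis 1 1"] N_nonneg[of "axis 1 1"]
    by (simp add: axis_eq_0_iff)
  have b: "b > 0" unfolding b_def using N_zero[of "axis 2 1"] N_nonneg[of "axis 2 1"]
    by (simp add: axis_eq_0_iff)
  let ?e1 = "(1/a) *\<^sub>R (axis 1 1 :: real^2)" and ?e2 = "(1/b) *\<^sub>R (axis 2 1 :: real^2)"
  have "(?e1, ?e2) \<in> ?K \<times> ?K"
    using a b N_scale[of "1/a" "axis 1 1"] N_scale[of "1/b" "axis 2 1"]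
    by (simp add: unit_ball_N_def a_def b_def)
  then have "\<bar>det2 ?e1 ?e2\<bar> \<le> \<bar>det2 u v\<bar>" using qmax by (force simp: u_def v_def)
  moreover have "det2 ?e1 ?e2 = 1 / (a * b)" by (simp add: det2_def axis_def)
  moreover have pos: "1/(a*b) > 0" using a b by simp
  ultimately have "\<bar>det2 u v\<bar> > 0" by linarith
  then have "det2 u v \<noteq> 0" by simp
  moreover have "\<bar>det2 x v\<bar> \<le> \<bar>det2 u v\<bar>" if "N x \<le> 1" for x
    using qmax[rule_format, of "(x, v)"] that v by (simp add: u_def v_def unit_ball_N_def)
  moreover have "\<bar>det2 u x\<bar> \<le> \<bar>det2 u v\<bar>" if "N x \<le> 1" for x
    using qmax[rule_format, of "(u, x)"] that u by (simp add: u_def v_def unit_ball_N_def)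
  ultimately show ?thesis using that u v by blast
qed

end

lemma fq_bd: "\<bar>s1\<bar> \<le> 1 \<Longrightarrow> \<bar>s2\<bar> \<le> 1 \<Longrightarrow> \<bar>fq k s1 s2\<bar> \<le> 1"
  unfolding fq_def by (cases k) auto

lemma fq_pair: "fq (b1,b2,i,True) s1 s2 + fq (b1,b2,i,False) s1 s2 =
   (if (0 \<le> s1) = b1 \<and> (0 \<le> s2) = b2 then 1 else 0)"
  unfolding fq_def by auto

lemma fq_all: "fq (False,False,True,True) s1 s2 + fq (False,False,True,False) s1 s2 +
  fq (False,True,True,True) s1 s2 + fq (False,True,True,False) s1 s2 +
  fq (True,False,True,True) s1 s2 + fq (True,False,True,False) s1 s2 +
  fq (True,True,True,True) s1 s2 + fq (True,True,True,False) s1 s2 = 1"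
  unfolding fq_def by auto

theorem mainTheorem1:
  fixes N :: "real^2 \<Rightarrow> real" and \<nu> :: "(real^2) measure"
  assumes "is_norm N"
    and "prob_space \<nu>"
    and "sets \<nu> = sets borel"
    and "measure \<nu> (unit_ball_N N) = 1"
  shows "avg_self_dist N \<nu> \<le> 48/31 + 6/31 * sqrt 2 \<and>
         avg_self_dist N \<nu> < 3/2 + 1/4 * sqrt 2"
proof -
  note nN = assms(1)
  interpret P: prob_space \<nu> by (rule assms(2))
  obtain u v where u: "N u \<le> 1" and v: "N v \<le> 1" and D0: "det2 u v \<noteq> 0"
    and m1: "\<And>x. N x \<le> 1 \<Longrightarrow> \<bar>det2 x v\<bar> \<le> \<bar>det2 u v\<bar>"
    and m2: "\<And>x. N x \<le> 1 \<Longrightarrow> \<bar>det2 u x\<bar> \<le> \<bar>det2 u v\<bar>"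
    using auerbach[OF nN] by blast
  define c1 where "c1 x = det2 x v / det2 u v" for x
  define c2 where "c2 x = det2 u x / det2 u v" for x
  define cl where "cl t = max (-1) (min 1 t)" for t :: real
  define \<phi> where "\<phi> k x = fq k (cl (c1 x)) (cl (c2 x))" for k x
  let ?K = "unit_ball_N N"
  have c1b: "\<bar>c1 x\<bar> \<le> 1" if "x \<in> ?K" for x
    using m1[of x] that D0 by (simp add: c1_def unit_ball_N_def abs_divide divide_le_eq_1)
  have c2b: "\<bar>c2 x\<bar> \<le> 1" if "x \<in> ?K" for x
    using m2[of x] that D0 by (simp add: c2_def unit_ball_N_def abs_divide divide_le_eq_1)
  have clid: "\<bar>t\<bar> \<le> 1 \<Longrightarrow> cl t = t" for t unfolding cl_def by auto
  have clb: "\<bar>cl t\<bar> \<le> 1" for t unfolding cl_def by auto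
  have Nxy: "N (x - y) \<le> \<bar>c1 x - c1 y\<bar> + \<bar>c2 x - c2 y\<bar>" for x y
  proof -
    have "x - y = (c1 x - c1 y) *\<^sub>R u + (c2 x - c2 y) *\<^sub>R v"
      using coord_decomp[OF D0, of "x - y"]
      by (simp add: c1_def c2_def det2_lin1 det2_lin2 diff_divide_distrib)
    then have "N (x - y) \<le> \<bar>c1 x - c1 y\<bar> * N u + \<bar>c2 x - c2 y\<bar> * N v"
      using N_comb[OF nN] by metis
    also have "\<dots> \<le> \<bar>c1 x - c1 y\<bar> * 1 + \<bar>c2 x - c2 y\<bar> * 1"
      using u v by (intro add_mono mult_left_mono) auto
    finally show ?thesis by simp
  qed
  have DB: "N (x - y) \<le> 2 - (\<Sum>k\<in>UNIV. \<phi> k x * \<phi> k y)" if "x \<in> ?K" "y \<in> ?K" for x y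
  proof -
    have "\<phi> k x = fq k (c1 x) (c2 x)" "\<phi> k y = fq k (c1 y) (c2 y)" for k
      using that c1b c2b clid by (simp_all add: \<phi>_def)
    moreover have "N (x - y) \<le> 2"
      using N_diff[OF nN, of x y] that by (simp add: unit_ball_N_def)
    ultimately show ?thesis
      using pointwise[of "c1 x" "c2 x" "c1 y" "c2 y" "N (x - y)"] c1b c2b that Nxy[of x y] by simp
  qed
  have D0': "u $ 1 * v $ 2 - u $ 2 * v $ 1 \<noteq> 0" using D0 by (simp add: det2_def)
  have mb1: "(\<lambda>x. cl (c1 x)) \<in> borel_measurable borel"
    unfolding cl_def c1_def det2_def
    by (intro borel_measurable_continuous_onI continuous_intros ballI D0')
  have mb2: "(\<lambda>x. cl (c2 x)) \<in> borel_measurable borel"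
    unfolding cl_def c2_def det2_def
    by (intro borel_measurable_continuous_onI continuous_intros ballI D0')
  have mc1: "(\<lambda>x. cl (c1 x)) \<in> borel_measurable \<nu>"
    unfolding measurable_cong_sets[OF assms(3) refl] by (rule mb1)
  have mc2: "(\<lambda>x. cl (c2 x)) \<in> borel_measurable \<nu>"
    unfolding measurable_cong_sets[OF assms(3) refl] by (rule mb2)
  have meas: "\<phi> k \<in> borel_measurable \<nu>" for k
    unfolding \<phi>_def by (rule meas_test[OF mc1 mc2])
  have bnd: "\<bar>\<phi> k x\<bar> \<le> 1" for k x unfolding \<phi>_def by (rule fq_bd[OF clb clb])
  have main: "avg_self_dist N \<nu> \<le> 2 - (\<Sum>k\<in>UNIV. (\<integral>x. \<phi> k x \<partial>\<nu>)^2)"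
    unfolding avg_self_dist_def
  proof (rule abstract_bound[where B=1 and K="?K" and I=UNIV])
    show "prob_space \<nu>" by (rule assms(2))
    show "measure \<nu> ?K = 1" by (rule assms(4))
    show "finite (UNIV :: (bool\<times>bool\<times>bool\<times>bool) set)" by simp
    show "\<phi> k \<in> borel_measurable \<nu>" for k by (rule meas)
    show "\<bar>\<phi> k x\<bar> \<le> 1" for k x by (rule bnd)
    show "0 \<le> N (x - y)" for x y by (rule N_nonneg[OF nN])
    show "N (x - y) \<le> 2 - (\<Sum>k\<in>UNIV. \<phi> k x * \<phi> k y)" if "x \<in> ?K" "y \<in> ?K" for x y
      using DB that by blast
  qed
  have int: "integrable \<nu> (\<phi> k)" for k
    by (intro P.integrable_const_bound[of _ 1] AE_I2) (simp_all add: meas bnd)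
  define I where "I k = (\<integral>x. \<phi> k x \<partial>\<nu>)" for k
  have pairI: "I (b1,b2,i,True) + I (b1,b2,i,False) =
     (\<integral>x. (if (0 \<le> cl (c1 x)) = b1 \<and> (0 \<le> cl (c2 x)) = b2 then 1 else 0) \<partial>\<nu>)" for b1 b2 i
  proof -
    have "I (b1,b2,i,True) + I (b1,b2,i,False) = (\<integral>x. \<phi> (b1,b2,i,True) x + \<phi> (b1,b2,i,False) x \<partial>\<nu>)"
      unfolding I_def by (rule Bochner_Integration.integral_add[symmetric, OF int int])
    also have "\<dots> = (\<integral>x. (if (0 \<le> cl (c1 x)) = b1 \<and> (0 \<le> cl (c2 x)) = b2 then 1 else 0) \<partial>\<nu>)"
      unfolding \<phi>_def fq_pair by simp
    finally show ?thesis .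
  qed
  let ?S = "{(False,False,True,True), (False,False,True,False), (False,True,True,True), (False,True,True,False),
     (True,False,True,True), (True,False,True,False), (True,True,True,True), (True,True,True,False)}"
  have "(\<Sum>k\<in>?S. I k) = (\<integral>x. (\<Sum>k\<in>?S. \<phi> k x) \<partial>\<nu>)"
    unfolding I_def by (rule Bochner_Integration.integral_sum[symmetric], rule int)
  also have "\<dots> = (\<integral>x. 1 \<partial>\<nu>)"
    by (rule Bochner_Integration.integral_cong[OF refl]) (simp add: \<phi>_def fq_all[simplified add.assoc])
  also have "\<dots> = 1" by (simp add: P.prob_space)
  finally have sumI: "(\<Sum>k\<in>?S. I k) = 1" .
  have "(\<Sum>k\<in>UNIV. (I k)^2) \<ge> 1/4"
  proof (rule sq16)
    show "I (b1,b2,False,True) + I (b1,b2,False,False) = I (b1,b2,True,True) + I (b1,b2,True,False)" for b1 b2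
      using pairI[of b1 b2 False] pairI[of b1 b2 True] by simp
    show "I (False,False,True,True) + I (False,False,True,False) + (I (False,True,True,True) + I (False,True,True,False))
      + (I (True,False,True,True) + I (True,False,True,False)) + (I (True,True,True,True) + I (True,True,True,False)) = 1"
      using sumI by (simp add: add.assoc)
  qed
  then have le: "avg_self_dist N \<nu> \<le> 7/4" using main unfolding I_def by simp
  have s2: "7/5 \<le> sqrt (2::real)" by (rule real_le_rsqrt) (simp add: power2_eq_square)
  show ?thesis using le s2 by simp
qed

end
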